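(* Let $m\ge2$ be an integer and let $g\in C^\infty(\mathbb{R})$ with $g(0)>0$. Let $\tilde g\in C^\infty(\mathbb{R})$ satisfy, for some $0<\delta<1$: $\tilde g(x)=g(x)$ for $|x|\le\delta$, $\tilde g(x)=\frac9{10}g(0)$ for $|x|\ge1$, and $0\le -x\tilde g'(x)<\frac15 g(0)$, $|x^2\tilde g''(x)|<\frac15g(0)$ for all $x\in\mathbb{R}$; and suppose $\frac9{10}g(0)\le\tilde g\le g(0)$ on $\mathbb{R}$. Put $\hat g=\tilde g/g(0)$ and $p(s,\tilde X)=\hat g(\tilde Xs)s^{2m}-s$. Then there is a function $\alpha\in C^\infty([0,\infty))$ such that for all $\tilde X\ge0$, $$\frac{\partial p}{\partial s}(\alpha(\tilde X),\tilde X)=0\quad\text{and}\quad \alpha_0\le\alpha(\tilde X)\le\alpha_1,$$ where $\alpha_0=(2m)^{-\frac1{2m-1}}$ and $\alpha_1=(\tfrac45\cdot 2m)^{-\frac1{2m-1}}$. *)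

theory Defs
  imports "HOL-Analysis.Analysis"
begin

definition smooth_real :: "(real \<Rightarrow> real) \<Rightarrow> bool" where
  "smooth_real f \<longleftrightarrow> (\<exists>D :: nat \<Rightarrow> real \<Rightarrow> real. D 0 = f \<and>
     (\<forall>n x. (D n has_real_derivative D (Suc n) x) (at x)))"

definition smooth_on_halfline :: "(real \<Rightarrow> real) \<Rightarrow> bool" where
  "smooth_on_halfline f \<longleftrightarrow> (\<exists>D :: nat \<Rightarrow> real \<Rightarrow> real.
     (\<forall>x\<ge>0. D 0 x = f x) \<and>
     (\<forall>n x. x \<ge> 0 \<longrightarrow> (D n has_real_derivative D (Suc n) x) (at x within {0..})))"

end

theory Submission
  imports Defs
begin


definition Dall :: "(real \<Rightarrow> real) \<Rightarrow> bool" where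
  "Dall f \<longleftrightarrow> (\<forall>x. (f has_real_derivative deriv f x) (at x))"

fun Ck :: "nat \<Rightarrow> (real \<Rightarrow> real) \<Rightarrow> bool" where
  "Ck 0 f = Dall f"
| "Ck (Suc n) f = (Dall f \<and> Ck n (deriv f))"

lemma deriv_eqI:
  assumes "\<And>x. (f has_real_derivative f' x) (at x)" shows "deriv f = f'"
  using assms by (intro ext DERIV_imp_deriv) auto

lemma Dall_I:
  assumes "\<And>x. (f has_real_derivative f' x) (at x)" shows "Dall f"
  using assms deriv_eqI[OF assms] unfolding Dall_def by auto

lemma Dall_D: "Dall f \<Longrightarrow> (f has_real_derivative deriv f x) (at x)"
  unfolding Dall_def by auto

lemma Ck_Dall: "Ck n f \<Longrightarrow> Dall f" by (cases n) auto

lemma Ck_mono: "Ck (Suc n) f \<Longrightarrow> Ck n f"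
  by (induction n arbitrary: f) (auto simp: Ck_Dall)

lemma Ck_const: "Ck n (\<lambda>x. c)"
proof (induction n arbitrary: c)
  case 0 show ?case using Dall_I[of "\<lambda>x. c" "\<lambda>x. 0"] by auto
next
  case (Suc n)
  have "deriv (\<lambda>x. c) = (\<lambda>x. 0)" by (rule deriv_eqI) (rule DERIV_const)
  then show ?case using Suc by (auto intro: Dall_I[of _ "\<lambda>x. 0"])
qed

lemma Ck_id: "Ck n (\<lambda>x. x)"
proof (cases n)
  case 0 then show ?thesis using Dall_I[of "\<lambda>x. x" "\<lambda>x. 1"] by auto
next
  case (Suc k)
  have "deriv (\<lambda>x::real. x) = (\<lambda>x. 1)" by (rule deriv_eqI) (rule DERIV_ident)
  then show ?thesis using Suc Ck_const Dall_I[of "\<lambda>x. x" "\<lambda>x. 1"] by auto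
qed

lemma Ck_add: "Ck n f \<Longrightarrow> Ck n g \<Longrightarrow> Ck n (\<lambda>x. f x + g x)"
proof (induction n arbitrary: f g)
  case (0 f g)
  have d: "\<And>x. ((\<lambda>x. f x + g x) has_real_derivative deriv f x + deriv g x) (at x)"
    using Ck_Dall[OF "0.prems"(1)] Ck_Dall[OF "0.prems"(2)] by (intro DERIV_add Dall_D)
  show ?case using Dall_I[OF d] by simp
next
  case (Suc n f g)
  have d: "\<And>x. ((\<lambda>x. f x + g x) has_real_derivative deriv f x + deriv g x) (at x)"
    using Ck_Dall[OF Suc.prems(1)] Ck_Dall[OF Suc.prems(2)] by (intro DERIV_add Dall_D)
  have "Ck n (\<lambda>x. deriv f x + deriv g x)"
    using Suc.prems by (intro Suc.IH) simp_all
  then show ?case using Dall_I[OF d] deriv_eqI[OF d] by simp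
qed

lemma Ck_mult: "Ck n f \<Longrightarrow> Ck n g \<Longrightarrow> Ck n (\<lambda>x. f x * g x)"
proof (induction n arbitrary: f g)
  case (0 f g)
  have d: "\<And>x. ((\<lambda>x. f x * g x) has_real_derivative deriv f x * g x + deriv g x * f x) (at x)"
    using Ck_Dall[OF "0.prems"(1)] Ck_Dall[OF "0.prems"(2)] by (intro DERIV_mult Dall_D)
  show ?case using Dall_I[OF d] by simp
next
  case (Suc n f g)
  have d: "\<And>x. ((\<lambda>x. f x * g x) has_real_derivative deriv f x * g x + deriv g x * f x) (at x)"
    using Ck_Dall[OF Suc.prems(1)] Ck_Dall[OF Suc.prems(2)] by (intro DERIV_mult Dall_D)
  have "Ck n (\<lambda>x. deriv f x * g x + deriv g x * f x)"
    using Suc.prems Ck_mono[OF Suc.prems(1)] Ck_mono[OF Suc.prems(2)]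
    by (intro Ck_add Suc.IH) simp_all
  then show ?case using Dall_I[OF d] deriv_eqI[OF d] by simp
qed

lemma Ck_comp: "Ck n f \<Longrightarrow> Ck n g \<Longrightarrow> Ck n (\<lambda>x. f (g x))"
proof (induction n arbitrary: f g)
  case (0 f g)
  have d: "\<And>x. ((\<lambda>x. f (g x)) has_real_derivative deriv f (g x) * deriv g x) (at x)"
    using Ck_Dall[OF "0.prems"(1)] Ck_Dall[OF "0.prems"(2)] by (intro DERIV_chain2 Dall_D)
  show ?case using Dall_I[OF d] by simp
next
  case (Suc n f g)
  have d: "\<And>x. ((\<lambda>x. f (g x)) has_real_derivative deriv f (g x) * deriv g x) (at x)"
    using Ck_Dall[OF Suc.prems(1)] Ck_Dall[OF Suc.prems(2)] by (intro DERIV_chain2 Dall_D)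
  have "Ck n (\<lambda>x. deriv f (g x))"
    using Suc.IH[of "deriv f" g] Suc.prems Ck_mono[OF Suc.prems(2)] by simp
  then have "Ck n (\<lambda>x. deriv f (g x) * deriv g x)"
    using Suc.prems by (intro Ck_mult) simp_all
  then show ?case using Dall_I[OF d] deriv_eqI[OF d] by simp
qed

lemma Ck_inverse: "Ck n f \<Longrightarrow> (\<And>x. f x \<noteq> 0) \<Longrightarrow> Ck n (\<lambda>x. inverse (f x))"
proof (induction n arbitrary: f)
  case (0 f)
  have d: "((\<lambda>x. inverse (f x)) has_real_derivative
      (-1) * (deriv f x * (inverse (f x) * inverse (f x)))) (at x)" for x
    using DERIV_inverse_fun[OF Dall_D[OF Ck_Dall[OF "0.prems"(1)], of x]] "0.prems"(2)[of x]
    by (simp add: power2_eq_square)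
  show ?case using Dall_I[OF d] by simp
next
  case (Suc n f)
  have d: "((\<lambda>x. inverse (f x)) has_real_derivative
      (-1) * (deriv f x * (inverse (f x) * inverse (f x)))) (at x)" for x
    using DERIV_inverse_fun[OF Dall_D[OF Ck_Dall[OF Suc.prems(1)], of x]] Suc.prems(2)[of x]
    by (simp add: power2_eq_square)
  have "Ck n (\<lambda>x. (-1) * (deriv f x * (inverse (f x) * inverse (f x))))"
    using Suc.prems Ck_mono[OF Suc.prems(1)]
    by (intro Ck_mult Ck_const Suc.IH) simp_all
  then show ?case using Dall_I[OF d] deriv_eqI[OF d] by simp
qed

lemma powr_der_aux:
  assumes "Dall f" "f x > 0"
  shows "((\<lambda>x. f x powr a) has_real_derivative
      a * (f x powr a * (inverse (f x) * deriv f x))) (at x)"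
proof -
  have "f x powr (a - of_nat 1) = f x powr a * inverse (f x)"
    using assms(2) by (simp add: powr_diff divide_inverse)
  then show ?thesis
    using DERIV_fun_powr[OF Dall_D[OF assms(1), of x] assms(2), of a]
    by (simp add: mult_ac)
qed

lemma Ck_powr: "Ck n f \<Longrightarrow> (\<And>x. f x > 0) \<Longrightarrow> Ck n (\<lambda>x. f x powr a)"
proof (induction n arbitrary: f)
  case (0 f)
  have d: "((\<lambda>x. f x powr a) has_real_derivative
      a * (f x powr a * (inverse (f x) * deriv f x))) (at x)" for x
    using powr_der_aux[OF Ck_Dall[OF "0.prems"(1)] "0.prems"(2)] .
  show ?case using Dall_I[OF d] by simp
next
  case (Suc n f)
  have d: "((\<lambda>x. f x powr a) has_real_derivative
      a * (f x powr a * (inverse (f x) * deriv f x))) (at x)" for x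
    using powr_der_aux[OF Ck_Dall[OF Suc.prems(1)] Suc.prems(2)] .
  have fne: "\<And>x. f x \<noteq> 0" using Suc.prems(2) by (metis less_irrefl)
  have "Ck n (\<lambda>x. a * (f x powr a * (inverse (f x) * deriv f x)))"
    using Suc.prems Ck_mono[OF Suc.prems(1)] fne
    by (intro Ck_mult Ck_const Suc.IH Ck_inverse) simp_all
  then show ?case using Dall_I[OF d] deriv_eqI[OF d] by simp
qed

lemma Ck_invfun:
  assumes L: "\<And>n. Ck n L" and pos: "\<And>x. deriv L x > 0"
    and li1: "\<And>x. L (Li x) = x" and li2: "\<And>x. Li (L x) = x"
  shows "Ck n Li"
proof -
  have cont: "isCont L x" for x using Dall_D[OF Ck_Dall[OF L[of 0]]]
    by (rule DERIV_isCont)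
  have icont: "isCont Li y" for y
  proof -
    have "isCont Li (L (Li y))"
      by (rule isCont_inverse_function[where d=1]) (auto simp: li2 cont)
    then show ?thesis by (simp add: li1)
  qed
  have d: "(Li has_real_derivative inverse (deriv L (Li y))) (at y)" for y
    by (rule DERIV_inverse_function[where a="y-1" and b="y+1"])
       (auto intro: Dall_D[OF Ck_Dall[OF L[of 0]]] simp: li1 icont less_imp_neq[OF pos, symmetric])
  show ?thesis
  proof (induction n)
    case 0 then show ?case using Dall_I[OF d] by simp
  next
    case (Suc n)
    have "Ck n (\<lambda>y. deriv L (Li y))"
      using Ck_comp[of n "deriv L" Li] L[of "Suc n"] Suc.IH by simp
    then have "Ck n (\<lambda>y. inverse (deriv L (Li y)))"
      by (rule Ck_inverse) (simp add: less_imp_neq[OF pos, symmetric])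
    then show ?case using Dall_I[OF d] deriv_eqI[OF d] by simp
  qed
qed

lemma smooth_Ck_aux:
  "\<And>f D. D 0 = f \<Longrightarrow> (\<And>n x. (D n has_real_derivative D (Suc n) x) (at x)) \<Longrightarrow> Ck n f"
proof (induction n)
  case (0 f D)
  have d: "(f has_real_derivative D 1 x) (at x)" for x
    using "0.prems"(2)[of 0 x] "0.prems"(1) by simp
  show ?case using Dall_I[OF d] by simp
next
  case (Suc n f D)
  have d: "(f has_real_derivative D 1 x) (at x)" for x
    using Suc.prems(2)[of 0 x] Suc.prems(1) by simp
  have "Ck n (D 1)" using Suc.IH[of "\<lambda>k. D (Suc k)" "D 1"] Suc.prems(2) by simp
  then show "Ck (Suc n) f" using Dall_I[OF d] deriv_eqI[OF d] by simp
qed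

lemma smooth_Ck: "smooth_real f \<Longrightarrow> Ck n f"
  unfolding smooth_real_def using smooth_Ck_aux by blast

lemma Ck_iter: "Ck (k + n) f \<Longrightarrow> Ck k ((deriv ^^ n) f)"
proof (induction n arbitrary: f)
  case 0 then show ?case by simp
next
  case (Suc n)
  have "Ck (Suc (k + n)) f" using Suc.prems by simp
  then have "Ck (k + n) (deriv f)" by simp
  then have "Ck k ((deriv ^^ n) (deriv f))" by (rule Suc.IH)
  moreover have "(deriv ^^ Suc n) f = (deriv ^^ n) (deriv f)"
    by (simp only: funpow_Suc_right comp_apply)
  ultimately show ?case by metis
qed

lemma Ck_smooth: "(\<And>n. Ck n f) \<Longrightarrow> smooth_real f"
  unfolding smooth_real_def
proof (intro exI[of _ "\<lambda>n. (deriv ^^ n) f"] conjI allI)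
  assume a: "\<And>n. Ck n f"
  fix n x
  have dn: "Dall ((deriv ^^ n) f)" using Ck_iter[of 0 n f] a by simp
  then show "((deriv ^^ n) f has_real_derivative (deriv ^^ Suc n) f x) (at x)"
    using Dall_D[OF dn, of x] by (simp only: funpow.simps comp_apply)
qed simp



theorem lemma6p6:
  fixes m :: nat and g gt :: "real \<Rightarrow> real" and \<delta> :: real
  assumes m2: "m \<ge> 2"
    and g_smooth: "smooth_real g" and g0: "g 0 > 0"
    and gt_smooth: "smooth_real gt"
    and \<delta>: "0 < \<delta>" "\<delta> < 1"
    and near: "\<And>x. \<bar>x\<bar> \<le> \<delta> \<Longrightarrow> gt x = g x"
    and far: "\<And>x. \<bar>x\<bar> \<ge> 1 \<Longrightarrow> gt x = 9/10 * g 0"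
    and d1: "\<And>x. 0 \<le> - x * deriv gt x \<and> - x * deriv gt x < g 0 / 5"
    and d2: "\<And>x. \<bar>x^2 * deriv (deriv gt) x\<bar> < g 0 / 5"
    and bnd: "\<And>x. 9/10 * g 0 \<le> gt x \<and> gt x \<le> g 0"
  shows "\<exists>\<alpha> :: real \<Rightarrow> real. smooth_on_halfline \<alpha> \<and>
    (\<forall>X\<ge>0.
       deriv (\<lambda>s. (gt (X * s) / g 0) * s ^ (2*m) - s) (\<alpha> X) = 0 \<and>
       (2 * real m) powr (-1 / (2 * real m - 1)) \<le> \<alpha> X \<and>
       \<alpha> X \<le> (4/5 * (2 * real m)) powr (-1 / (2 * real m - 1)))"
proof -
  define G where "G = g 0"
  define M where "M = 2 * real m"
  define q where "q = 2 * real m - 1"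
  have Gpos: "G > 0" using g0 G_def by simp
  have M4: "M \<ge> 4" using m2 M_def by simp
  have qM: "q = M - 1" using M_def q_def by simp
  have q3: "q \<ge> 3" using M4 qM by simp
  have gtCk: "\<And>n. Ck n gt" using smooth_Ck[OF gt_smooth] .
  have gdCk: "\<And>n. Ck n (deriv gt)" using gtCk[of "Suc _"] by simp
  have gt_der: "\<And>x. (gt has_real_derivative deriv gt x) (at x)"
    using Dall_D[OF Ck_Dall[OF gtCk[of 0]]] .
  have gd_der: "\<And>x. (deriv gt has_real_derivative deriv (deriv gt) x) (at x)"
    using Dall_D[OF Ck_Dall[OF gdCk[of 0]]] .
  define h where "h = (\<lambda>u. (u * deriv gt u + M * gt u) / G)"
  have hCk: "\<And>n. Ck n h"
    unfolding h_def divide_inverse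
    by (intro Ck_mult Ck_add Ck_id gdCk Ck_const gtCk)
  have hlow: "4/5*M < h u" for u
  proof -
    have a: "u * deriv gt u > - G/5" using d1[of u] G_def by simp
    have b: "M * gt u \<ge> M * (9/10*G)" using bnd[of u] M4 G_def by (intro mult_left_mono) auto
    have c: "M * G \<ge> 4 * G" using M4 Gpos by simp
    have b2: "M * (9/10*G) = 9/10*(M*G)" by simp
    have "4/5*(M*G) < u * deriv gt u + M * gt u" using a b b2 c Gpos by linarith
    then have "4/5*M*G < u * deriv gt u + M * gt u" by (simp add: mult.assoc)
    then show ?thesis unfolding h_def using Gpos by (simp add: pos_less_divide_eq)
  qed
  have hup: "h u \<le> M" for u
  proof -
    have a: "u * deriv gt u \<le> 0" using d1[of u] by simp
    have b: "M * gt u \<le> M * G" using bnd[of u] M4 G_def by (intro mult_left_mono) auto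
    have "u * deriv gt u + M * gt u \<le> M * G" using a b by simp
    then show ?thesis unfolding h_def using Gpos by (simp add: pos_divide_le_eq)
  qed
  have hpos: "h u > 0" for u using hlow[of u] M4 by simp
  define h' where "h' = (\<lambda>u. (deriv gt u + u * deriv (deriv gt) u + M * deriv gt u) / G)"
  have h_der: "(h has_real_derivative h' u) (at u)" for u
  proof -
    have "((\<lambda>u. (u * deriv gt u + M * gt u) / G) has_real_derivative
        ((1 * deriv gt u + deriv (deriv gt) u * u) + M * deriv gt u) / G) (at u)"
      by (intro DERIV_cdivide DERIV_add DERIV_mult DERIV_cmult DERIV_ident gt_der gd_der)
    then show ?thesis unfolding h_def h'_def by (simp add: algebra_simps)
  qed
  have key: "q * h u + u * h' u > 0" for u
  proof -
    have a: "u * deriv gt u > - G/5" using d1[of u] G_def by simp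
    have a2: "(M+1) * (u * deriv gt u) > (M+1) * (- G/5)"
      using a M4 by (intro mult_strict_left_mono) auto
    have b: "u^2 * deriv (deriv gt) u > - G/5" using d2[of u] G_def by linarith
    have "u * h' u = ((M+1) * (u * deriv gt u) + u^2 * deriv (deriv gt) u) / G"
      unfolding h'_def by (simp add: algebra_simps power2_eq_square)
    also have "\<dots> > - (M+2)/5"
    proof -
      have "(M+1) * (u * deriv gt u) + u^2 * deriv (deriv gt) u > - (M+2)/5 * G"
      proof -
        have eq: "-(M+2)/5*G = (M+1)*(-G/5) + (-G/5)" by (simp add: field_simps)
        show ?thesis using a2 b eq by linarith
      qed
      then show ?thesis using Gpos by (simp add: pos_less_divide_eq)
    qed
    finally have c: "u * h' u > - (M+2)/5" .
    have d: "q * h u > q * (4/5*M)" using hlow[of u] q3 by (intro mult_strict_left_mono) auto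
    have e: "q * M \<ge> 3 * M" using q3 M4 by (intro mult_right_mono) auto
    have f1: "q * (4/5*M) = 4/5*(q*M)" by simp
    have f2: "- (M+2)/5 = -M/5 - 2/5" by simp
    show ?thesis using c d e f1 f2 M4 by linarith
  qed
  define L where "L = (\<lambda>u. u * h u powr (1/q))"
  define L' where "L' = (\<lambda>u. h u powr (1/q - 1) * (h u + u * h' u / q))"
  have L_der: "(L has_real_derivative L' u) (at u)" for u
  proof -
    have "(L has_real_derivative 1 * h u powr (1/q) + (1/q * h u powr (1/q - of_nat 1) * h' u) * u) (at u)"
      unfolding L_def by (intro DERIV_mult DERIV_ident DERIV_fun_powr h_der hpos)
    moreover have "h u powr (1/q) = h u powr (1/q - 1) * h u"
      using hpos[of u] by (simp add: powr_diff)
    ultimately show ?thesis unfolding L'_def by (simp add: algebra_simps)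
  qed
  have L'pos: "L' u > 0" for u
  proof -
    have "h u + u * h' u / q = (q * h u + u * h' u) / q" using q3 by (simp add: field_simps)
    also have "\<dots> > 0" using key[of u] q3 by simp
    finally show ?thesis unfolding L'_def using hpos[of u] by simp
  qed
  have dL: "deriv L = L'" using deriv_eqI[OF L_der] .
  have LCk: "\<And>n. Ck n L"
    unfolding L_def by (intro Ck_mult Ck_id Ck_powr hCk hpos)
  have Lcont: "isCont L u" for u using L_der by (rule DERIV_isCont)
  have Lmono: "a < b \<Longrightarrow> L a < L b" for a b
    by (rule DERIV_pos_imp_increasing) (use L_der L'pos in blast)+
  have injL: "inj L" by (rule linorder_injI) (use Lmono in force)
  have L0: "L 0 = 0" unfolding L_def by simp
  have Lge: "L y \<ge> y" if "y \<ge> 0" for y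
  proof -
    have o: "1 \<le> h y powr (1/q)" using hlow[of y] M4 q3 by (intro ge_one_powr_ge_zero) auto
    show ?thesis unfolding L_def using mult_left_mono[OF o that] by simp
  qed
  have Lle: "L y \<le> y" if "y \<le> 0" for y
  proof -
    have o: "1 \<le> h y powr (1/q)" using hlow[of y] M4 q3 by (intro ge_one_powr_ge_zero) auto
    show ?thesis unfolding L_def using mult_left_mono_neg[OF o that] by simp
  qed
  have surjL: "\<exists>u. L u = y" for y
  proof (cases "y \<ge> 0")
    case True
    then show ?thesis using IVT[of L 0 y y] L0 Lge[OF True] Lcont by auto
  next
    case False
    then show ?thesis using IVT[of L y y 0] L0 Lle[of y] Lcont by auto
  qed
  define Li where "Li = inv L"
  have li1: "L (Li x) = x" for x unfolding Li_def using surjL by (metis f_inv_into_f rangeI)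
  have li2: "Li (L x) = x" for x unfolding Li_def using injL by simp
  have LiCk: "\<And>n. Ck n Li" using Ck_invfun[OF LCk _ li1 li2] dL L'pos by auto
  define \<alpha> where "\<alpha> = (\<lambda>X. h (Li X) powr (-1/q))"
  have \<alpha>Ck: "Ck n \<alpha>" for n unfolding \<alpha>_def
    by (rule Ck_powr[OF Ck_comp[OF hCk LiCk]]) (rule hpos)
  have sm: "smooth_real \<alpha>" by (rule Ck_smooth) (rule \<alpha>Ck)
  have smh: "smooth_on_halfline \<alpha>"
  proof -
    obtain D where "D 0 = \<alpha>" "\<And>n x. (D n has_real_derivative D (Suc n) x) (at x)"
      using sm unfolding smooth_real_def by blast
    then show ?thesis unfolding smooth_on_halfline_def
      by (intro exI[of _ D]) (auto intro: has_field_derivative_at_within)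
  qed
  have main: "deriv (\<lambda>s. (gt (X * s) / g 0) * s ^ (2*m) - s) (\<alpha> X) = 0 \<and>
       (2 * real m) powr (-1 / (2 * real m - 1)) \<le> \<alpha> X \<and>
       \<alpha> X \<le> (4/5 * (2 * real m)) powr (-1 / (2 * real m - 1))" for X
  proof -
    define u where "u = Li X"
    define H where "H = h u"
    define s where "s = \<alpha> X"
    have Hpos: "H > 0" using hpos H_def by simp
    have s_def': "s = H powr (-1/q)" unfolding s_def \<alpha>_def H_def u_def ..
    have spos: "s > 0" using Hpos s_def' by simp
    have XL: "u * H powr (1/q) = X" using li1[of X] unfolding L_def H_def u_def .
    have us: "X * s = u"
    proof -
      have "X * s = u * (H powr (1/q) * H powr (-1/q))" using XL s_def' by simp
      also have "H powr (1/q) * H powr (-1/q) = 1"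
        using Hpos by (simp add: powr_add[symmetric])
      finally show ?thesis by simp
    qed
    define P where "P = s ^ (2*m - 1)"
    have P: "P = inverse H"
    proof -
      have "P = s powr real (2*m - 1)" unfolding P_def using spos by (simp add: powr_realpow)
      also have "real (2*m - 1) = q" using m2 q_def by (simp add: of_nat_diff)
      also have "s powr q = H powr (-1/q * q)" unfolding s_def' by (simp add: powr_powr)
      also have "-1/q * q = - 1" using q3 by simp
      finally show ?thesis using Hpos by (simp add: powr_minus)
    qed
    have e2: "2*m = Suc (2*m - 1)" using m2 by simp
    have e: "s ^ (2*m) = s * P" unfolding P_def by (subst e2) simp
    have Xs: "X * s ^ (2*m) = u * P" using e us by (simp add: mult.assoc[symmetric])
    have c1: "((\<lambda>s. X * s) has_real_derivative X) (at t)" for t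
      using DERIV_cmult[OF DERIV_ident, of X] by simp
    have der: "((\<lambda>s. (gt (X * s) / g 0) * s ^ (2*m) - s) has_real_derivative
       (deriv gt (X * t) * X / g 0) * t ^ (2*m) + (real (2*m) * t ^ (2*m - Suc 0)) * (gt (X * t) / g 0) - 1) (at t)" for t
      using DERIV_diff[OF DERIV_mult[OF DERIV_cdivide[OF DERIV_chain2[OF gt_der[of "X*t"] c1[of t]]]
          DERIV_pow[of "2*m" t]] DERIV_ident] .
    have "deriv (\<lambda>s. (gt (X * s) / g 0) * s ^ (2*m) - s) s =
        (deriv gt (X * s) * X / g 0) * s ^ (2*m) + (real (2*m) * s ^ (2*m - Suc 0)) * (gt (X * s) / g 0) - 1"
      using der by (rule DERIV_imp_deriv)
    also have "\<dots> = deriv gt u / G * (X * s ^ (2*m)) + gt u / G * (M * P) - 1"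
      using us unfolding P_def G_def M_def by (simp add: mult_ac)
    also have "\<dots> = P * H - 1" unfolding Xs H_def h_def using Gpos by (simp add: field_simps)
    also have "\<dots> = 0" using P Hpos by simp
    finally have r1: "deriv (\<lambda>s. (gt (X * s) / g 0) * s ^ (2*m) - s) (\<alpha> X) = 0"
      unfolding s_def .
    have r2: "M powr (-1/q) \<le> s" unfolding s_def'
      using hup[of u] Hpos q3 H_def by (intro powr_mono2') auto
    have r3: "s \<le> (4/5*M) powr (-1/q)" unfolding s_def'
      using hlow[of u] Hpos q3 M4 H_def by (intro powr_mono2') auto
    show ?thesis using r1 r2 r3 unfolding s_def M_def q_def by simp
  qed
  show ?thesis using smh main by blast
qed

end
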